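(* Let $R$ be a commutative semiring with identity that is additively cancellative, yoked and zerosumfree. Then for every $a\in R$, the principal ideal $\langle a\rangle = aR=\{ar\mid r\in R\}$ is a $k$-ideal of $R$.
   Context: A semiring is a set $R$ with addition and multiplication such that $(R,+)$ is a commutative monoid with identity $0$, $(R,\cdot)$ is a monoid with identity $1$, multiplication distributes over addition on both sides, $0\cdot r=0=r\cdot 0$ for all $r$, and $1\neq 0$. An ideal $I$ is a $k$-ideal if $x+y\in I$ and $x\in I$ imply $y\in I$. $R$ is additively cancellative if $a+c=b+c$ implies $a=b$; yoked if for all $a,b\in R$ there exists $r\in R$ with $a+r=b$ or $b+r=a$; zerosumfree if $a+b=0$ implies $a=b=0$. *)

theory Defs
  imports Main
begin

definition add_cancellative :: "'a::comm_semiring_1 itself \<Rightarrow> bool" where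
  "add_cancellative _ \<longleftrightarrow> (\<forall>a b c :: 'a. a + c = b + c \<longrightarrow> a = b)"

definition yoked :: "'a::comm_semiring_1 itself \<Rightarrow> bool" where
  "yoked _ \<longleftrightarrow> (\<forall>a b :: 'a. \<exists>r. a + r = b \<or> b + r = a)"

definition zerosumfree :: "'a::comm_semiring_1 itself \<Rightarrow> bool" where
  "zerosumfree _ \<longleftrightarrow> (\<forall>a b :: 'a. a + b = 0 \<longrightarrow> a = 0 \<and> b = 0)"

definition semiring_ideal :: "'a::comm_semiring_1 set \<Rightarrow> bool" where
  "semiring_ideal I \<longleftrightarrow> 0 \<in> I \<and> (\<forall>x\<in>I. \<forall>y\<in>I. x + y \<in> I) \<and> (\<forall>x\<in>I. \<forall>r. r * x \<in> I)"

definition k_ideal :: "'a::comm_semiring_1 set \<Rightarrow> bool" where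
  "k_ideal I \<longleftrightarrow> semiring_ideal I \<and> (\<forall>x y. x + y \<in> I \<longrightarrow> x \<in> I \<longrightarrow> y \<in> I)"

definition principal_ideal :: "'a::comm_semiring_1 \<Rightarrow> 'a set" where
  "principal_ideal a = {a * r | r. True}"

end

theory Submission
  imports Defs
begin

theorem lemma2p10:
  fixes a :: "'a::comm_semiring_1"
  assumes "add_cancellative TYPE('a)"
    and "yoked TYPE('a)"
    and "zerosumfree TYPE('a)"
  shows "k_ideal (principal_ideal a)"
proof -
  have canc: "\<And>u v w::'a. u + w = v + w \<Longrightarrow> u = v"
    using assms(1) unfolding add_cancellative_def by blast
  have yk: "\<And>u v::'a. \<exists>r. u + r = v \<or> v + r = u"
    using assms(2) unfolding yoked_def by blast
  have zs: "\<And>u v::'a. u + v = 0 \<Longrightarrow> u = 0 \<and> v = 0"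
    using assms(3) unfolding zerosumfree_def by blast
  have id: "semiring_ideal (principal_ideal a)"
    unfolding semiring_ideal_def principal_ideal_def
  proof (intro conjI ballI allI)
    show "0 \<in> {a * r |r. True}" by (metis (mono_tags) mult_zero_right mem_Collect_eq)
  next
    fix x y assume "x \<in> {a * r |r. True}" "y \<in> {a * r |r. True}"
    then obtain r s where "x = a * r" "y = a * s" by blast
    then have "x + y = a * (r + s)" by (simp add: distrib_left)
    then show "x + y \<in> {a * r |r. True}" by blast
  next
    fix x r assume "x \<in> {a * r |r. True}"
    then obtain s where "x = a * s" by blast
    then have "r * x = a * (r * s)" by (simp add: ac_simps)
    then show "r * x \<in> {a * r |r. True}" by blast
  qed
  have k: "y \<in> principal_ideal a" if h1: "x + y \<in> principal_ideal a" and h2: "x \<in> principal_ideal a" for x y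
  proof -
    obtain s where s: "x + y = a * s" using h1 unfolding principal_ideal_def by blast
    obtain r where r: "x = a * r" using h2 unfolding principal_ideal_def by blast
    obtain t where "r + t = s \<or> s + t = r" using yk by blast
    then show ?thesis
    proof
      assume "r + t = s"
      then have "y + x = a * t + x" using s r by (metis add.commute distrib_left)
      then have "y = a * t" by (rule canc)
      then show ?thesis unfolding principal_ideal_def by blast
    next
      assume "s + t = r"
      then have e: "a * s + a * t = a * r" by (simp add: distrib_left[symmetric])
      have "(y + a * t) + x = (x + y) + a * t" by (simp only: ac_simps)
      also have "... = a * s + a * t" by (simp only: s)
      also have "... = x" using e r by simp
      finally have "(y + a * t) + x = 0 + x" by simp
      then have "y + a * t = 0" by (rule canc)
      then have "y = 0" using zs by blast
      then have "y = a * 0" by simp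
      then show ?thesis unfolding principal_ideal_def by blast
    qed
  qed
  show ?thesis unfolding k_ideal_def using id k by blast
qed

end
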